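(* (i) For any formula $A\in\mathcal{L}_\infty$ and any natural numbers $m,n$ both strictly greater than the index of every box occurring in $A$, $\mathbf{GL}_h\vdash\Box_mA\leftrightarrow\Box_nA$. (ii) For any formula $A$ of the ordinary unimodal language $\mathcal{L}_\Box$ and any witnesses $u,v$ for $A$, $\mathbf{GL}_h\vdash A(u)\rightarrow A(v)$.
   Context: The language $\mathcal{L}_\infty$ consists of modal formulas built from propositional atoms, $\bot,\top$, the connectives $\neg,\wedge,\vee,\rightarrow$ and unary modalities $\Box_n$ ($n\in\mathbb{N}$), with the restriction that $\Box_n A$ is a formula only if $n$ is strictly greater than the index of every box occurring in $A$. Axiom instances are only those that are $\mathcal{L}_\infty$-formulas. Axiom schemes (for all $n\ge0$): $\mathbf{H}$: $\Box_n A\rightarrow\Box_{n+1}A$; $\mathbf{K}_h$: $\Box_n(A\rightarrow B)\rightarrow(\Box_nA\rightarrow\Box_nB)$; $\mathbf{4}_h$: $\Box_nA\rightarrow\Box_{n+1}\Box_nA$; $\mathbf{L}_h$: $\Box_{n+1}(\Box_nA\rightarrow A)\rightarrow\Box_nA$. $\mathbf{GL}_h$ is the least set of $\mathcal{L}_\infty$-formulas containing all classical propositional tautologies and all instances of $\mathbf{H},\mathbf{K}_h,\mathbf{4}_h,\mathbf{L}_h$, closed under modus ponens and the rule: from $A$ infer $\Box_nA$ for any $n$ greater than all box indices in $A$. $\mathcal{L}_\Box$ is the usual modal language with one modality $\Box$ (same atoms). A witness for $A\in\mathcal{L}_\Box$ is an assignment of a natural number to each occurrence of $\Box$ in $A$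 such that the number assigned to each occurrence is strictly greater than the numbers assigned to all box occurrences inside its scope (formally: atoms have the empty witness $()$; $(w_1,w_2)$ is a witness for $B\circ C$ if $w_1,w_2$ are witnesses for $B,C$; a witness for $B$ is one for $\neg B$; $(n,w)$ is a witness for $\Box B$ if $w$ is a witness for $B$ and $n$ exceeds every number in $w$). For a witness $w$ of $A$, $A(w)\in\mathcal{L}_\infty$ is obtained by replacing each occurrence of $\Box$ by $\Box_n$, where $n$ is the number assigned to that occurrence. *)

theory Defs
  imports Main
begin

datatype hform =
    HAtom nat
  | HBot
  | HTop
  | HNeg hform
  | HAnd hform hform
  | HOr hform hform
  | HImp hform hform
  | HBox nat hform

definition HIff :: "hform \<Rightarrow> hform \<Rightarrow> hform" where
  "HIff A B = HAnd (HImp A B) (HImp B A)"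

fun boxes :: "hform \<Rightarrow> nat set" where
  "boxes (HAtom p) = {}"
| "boxes HBot = {}"
| "boxes HTop = {}"
| "boxes (HNeg A) = boxes A"
| "boxes (HAnd A B) = boxes A \<union> boxes B"
| "boxes (HOr A B) = boxes A \<union> boxes B"
| "boxes (HImp A B) = boxes A \<union> boxes B"
| "boxes (HBox n A) = insert n (boxes A)"

definition above :: "nat \<Rightarrow> hform \<Rightarrow> bool" where
  "above n A \<longleftrightarrow> (\<forall>k \<in> boxes A. k < n)"

fun wf :: "hform \<Rightarrow> bool" where
  "wf (HAtom p) = True"
| "wf HBot = True"
| "wf HTop = True"
| "wf (HNeg A) = wf A"
| "wf (HAnd A B) = (wf A \<and> wf B)"
| "wf (HOr A B) = (wf A \<and> wf B)"
| "wf (HImp A B) = (wf A \<and> wf B)"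
| "wf (HBox n A) = (wf A \<and> above n A)"

text \<open>Classical propositional evaluation, treating atoms and boxed formulas as
  propositional variables.\<close>
fun peval :: "(hform \<Rightarrow> bool) \<Rightarrow> hform \<Rightarrow> bool" where
  "peval v (HAtom p) = v (HAtom p)"
| "peval v HBot = False"
| "peval v HTop = True"
| "peval v (HNeg A) = (\<not> peval v A)"
| "peval v (HAnd A B) = (peval v A \<and> peval v B)"
| "peval v (HOr A B) = (peval v A \<or> peval v B)"
| "peval v (HImp A B) = (peval v A \<longrightarrow> peval v B)"
| "peval v (HBox n A) = v (HBox n A)"

definition taut :: "hform \<Rightarrow> bool" where
  "taut A \<longleftrightarrow> (\<forall>v. peval v A)"

inductive GLh :: "hform \<Rightarrow> bool" where
  Taut: "\<lbrakk>wf A; taut A\<rbrakk> \<Longrightarrow> GLh A"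
| AxH: "wf (HImp (HBox n A) (HBox (Suc n) A)) \<Longrightarrow> GLh (HImp (HBox n A) (HBox (Suc n) A))"
| AxK: "wf (HImp (HBox n (HImp A B)) (HImp (HBox n A) (HBox n B))) \<Longrightarrow>
        GLh (HImp (HBox n (HImp A B)) (HImp (HBox n A) (HBox n B)))"
| Ax4: "wf (HImp (HBox n A) (HBox (Suc n) (HBox n A))) \<Longrightarrow>
        GLh (HImp (HBox n A) (HBox (Suc n) (HBox n A)))"
| AxL: "wf (HImp (HBox (Suc n) (HImp (HBox n A) A)) (HBox n A)) \<Longrightarrow>
        GLh (HImp (HBox (Suc n) (HImp (HBox n A) A)) (HBox n A))"
| MP: "\<lbrakk>GLh (HImp A B); GLh A\<rbrakk> \<Longrightarrow> GLh B"
| Nec: "\<lbrakk>GLh A; above n A\<rbrakk> \<Longrightarrow> GLh (HBox n A)"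

datatype mform =
    MAtom nat
  | MBot
  | MTop
  | MNeg mform
  | MAnd mform mform
  | MOr mform mform
  | MImp mform mform
  | MBox mform

text \<open>Witness trees: () for atoms/constants, pairs for binary connectives,
  (n, w) for boxes; negation reuses the witness of its argument.\<close>
datatype wit = WUnit | WPair wit wit | WBox nat wit

fun wnums :: "wit \<Rightarrow> nat set" where
  "wnums WUnit = {}"
| "wnums (WPair w1 w2) = wnums w1 \<union> wnums w2"
| "wnums (WBox n w) = insert n (wnums w)"

fun is_witness :: "wit \<Rightarrow> mform \<Rightarrow> bool" where
  "is_witness WUnit (MAtom p) = True"
| "is_witness WUnit MBot = True"
| "is_witness WUnit MTop = True"
| "is_witness w (MNeg A) = is_witness w A"
| "is_witness (WPair w1 w2) (MAnd A B) = (is_witness w1 A \<and> is_witness w2 B)"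
| "is_witness (WPair w1 w2) (MOr A B) = (is_witness w1 A \<and> is_witness w2 B)"
| "is_witness (WPair w1 w2) (MImp A B) = (is_witness w1 A \<and> is_witness w2 B)"
| "is_witness (WBox n w) (MBox A) = (is_witness w A \<and> (\<forall>k \<in> wnums w. k < n))"
| "is_witness _ _ = False"

text \<open>A(w): the L_infinity formula obtained by labelling boxes along w
  (meaningful when w is a witness for A).\<close>
fun inst :: "mform \<Rightarrow> wit \<Rightarrow> hform" where
  "inst (MAtom p) w = HAtom p"
| "inst MBot w = HBot"
| "inst MTop w = HTop"
| "inst (MNeg A) w = HNeg (inst A w)"
| "inst (MAnd A B) (WPair w1 w2) = HAnd (inst A w1) (inst B w2)"
| "inst (MOr A B) (WPair w1 w2) = HOr (inst A w1) (inst B w2)"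
| "inst (MImp A B) (WPair w1 w2) = HImp (inst A w1) (inst B w2)"
| "inst (MBox A) (WBox n w) = HBox n (inst A w)"
| "inst _ _ = HBot"

end

theory Submission
  imports Defs
begin

lemma GLh_wf: "GLh A \<Longrightarrow> wf A"
  by (induction rule: GLh.induct) auto

lemma prop_cons:
  "(\<forall>X\<in>set Xs. GLh X) \<Longrightarrow> wf Y \<Longrightarrow> (\<forall>v. (\<forall>X\<in>set Xs. peval v X) \<longrightarrow> peval v Y) \<Longrightarrow> GLh Y"
proof (induction Xs arbitrary: Y)
  case Nil
  then show ?case by (intro GLh.Taut) (auto simp: taut_def)
next
  case (Cons X Xs)
  have "GLh (HImp X Y)"
    using Cons.prems by (intro Cons.IH) (auto dest: GLh_wf)
  then show ?case using Cons.prems by (auto intro: GLh.MP)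
qed

lemma above_mono: "above m A \<Longrightarrow> m \<le> k \<Longrightarrow> above k A"
  unfolding above_def by auto

lemma down_step:
  assumes "above k A" "wf A"
  shows "GLh (HImp (HBox (Suc k) A) (HBox k A))"
proof -
  define T where "T = HImp A (HImp (HBox k A) A)"
  have ab: "above (Suc k) A" using assms above_mono by auto
  have wT: "wf T" using assms by (simp add: T_def)
  have aT: "above (Suc k) T" using assms unfolding T_def above_def by auto
  have g1: "GLh T" using wT by (intro GLh.Taut) (auto simp: taut_def T_def)
  have g2: "GLh (HBox (Suc k) T)" using g1 aT by (rule GLh.Nec)
  have g3: "GLh (HImp (HBox (Suc k) T) (HImp (HBox (Suc k) A) (HBox (Suc k) (HImp (HBox k A) A))))"
    unfolding T_def by (rule GLh.AxK) (use assms aT ab in \<open>auto simp: T_def above_def\<close>)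
  have g4: "GLh (HImp (HBox (Suc k) (HImp (HBox k A) A)) (HBox k A))"
    by (rule GLh.AxL) (use assms aT ab in \<open>auto simp: T_def above_def\<close>)
  show ?thesis
    by (rule prop_cons[of "[HBox (Suc k) T, HImp (HBox (Suc k) T) (HImp (HBox (Suc k) A) (HBox (Suc k) (HImp (HBox k A) A))), HImp (HBox (Suc k) (HImp (HBox k A) A)) (HBox k A)]"])
       (use g2 g3 g4 assms ab in auto)
qed

lemma up_step:
  assumes "above k A" "wf A"
  shows "GLh (HImp (HBox k A) (HBox (Suc k) A))"
  by (rule GLh.AxH) (use assms above_mono in auto)

lemma chain:
  assumes "above m A" "wf A" "m \<le> n"
  shows "GLh (HImp (HBox m A) (HBox n A)) \<and> GLh (HImp (HBox n A) (HBox m A))"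
  using assms(3)
proof (induction n rule: dec_induct)
  case base
  have "GLh (HImp (HBox m A) (HBox m A))"
    by (rule prop_cons[of "[]"]) (use assms in auto)
  then show ?case by simp
next
  case (step k)
  have ak: "above k A" using assms step above_mono by auto
  have u: "GLh (HImp (HBox k A) (HBox (Suc k) A))" using up_step ak assms by auto
  have d: "GLh (HImp (HBox (Suc k) A) (HBox k A))" using down_step ak assms by auto
  have ak1: "above (Suc k) A" using ak above_mono by auto
  have "GLh (HImp (HBox m A) (HBox (Suc k) A))"
    by (rule prop_cons[of "[HImp (HBox m A) (HBox k A), HImp (HBox k A) (HBox (Suc k) A)]"])
       (use step u assms ak1 in auto)
  moreover have "GLh (HImp (HBox (Suc k) A) (HBox m A))"
    by (rule prop_cons[of "[HImp (HBox (Suc k) A) (HBox k A), HImp (HBox k A) (HBox m A)]"])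
       (use step d assms ak1 in auto)
  ultimately show ?case by simp
qed

lemma eqv:
  assumes "wf A" "above m A" "above n A"
  shows "GLh (HImp (HBox m A) (HBox n A))"
proof (cases "m \<le> n")
  case True then show ?thesis using chain assms by blast
next
  case False then show ?thesis using chain[of n A m] assms by auto
qed

lemma inst_props: "is_witness w A \<Longrightarrow> wf (inst A w) \<and> boxes (inst A w) \<subseteq> wnums w"
proof (induction A arbitrary: w)
  case (MAnd A1 A2) then show ?case by (cases w) auto
next
  case (MOr A1 A2) then show ?case by (cases w) auto
next
  case (MImp A1 A2) then show ?case by (cases w) auto
next
  case (MBox A) then show ?case by (cases w) (auto simp: above_def)
qed (cases w; auto)+

lemma part2: "is_witness u A \<Longrightarrow> is_witness v A \<Longrightarrow> GLh (HImp (inst A u) (inst A v))"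
proof (induction A arbitrary: u v)
  case (MAtom p)
  then show ?case by (intro prop_cons[of "[]"]) auto
next
  case MBot
  then show ?case by (intro prop_cons[of "[]"]) auto
next
  case MTop
  then show ?case by (intro prop_cons[of "[]"]) auto
next
  case (MNeg A)
  have "GLh (HImp (inst A v) (inst A u))" using MNeg by simp
  then show ?case using MNeg.prems
    by (intro prop_cons[of "[HImp (inst A v) (inst A u)]"]) (auto dest: GLh_wf)
next
  case (MAnd A1 A2)
  then obtain u1 u2 v1 v2 where uv: "u = WPair u1 u2" "v = WPair v1 v2"
    by (cases u; cases v; auto)
  have "GLh (HImp (inst A1 u1) (inst A1 v1))" "GLh (HImp (inst A2 u2) (inst A2 v2))"
    using MAnd uv by auto
  then show ?case using uv
    by (intro prop_cons[of "[HImp (inst A1 u1) (inst A1 v1), HImp (inst A2 u2) (inst A2 v2)]"])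
       (auto dest: GLh_wf)
next
  case (MOr A1 A2)
  then obtain u1 u2 v1 v2 where uv: "u = WPair u1 u2" "v = WPair v1 v2"
    by (cases u; cases v; auto)
  have "GLh (HImp (inst A1 u1) (inst A1 v1))" "GLh (HImp (inst A2 u2) (inst A2 v2))"
    using MOr uv by auto
  then show ?case using uv
    by (intro prop_cons[of "[HImp (inst A1 u1) (inst A1 v1), HImp (inst A2 u2) (inst A2 v2)]"])
       (auto dest: GLh_wf)
next
  case (MImp A1 A2)
  then obtain u1 u2 v1 v2 where uv: "u = WPair u1 u2" "v = WPair v1 v2"
    by (cases u; cases v; auto)
  have "GLh (HImp (inst A1 v1) (inst A1 u1))" "GLh (HImp (inst A2 u2) (inst A2 v2))"
    using MImp uv by auto
  then show ?case using uv
    by (intro prop_cons[of "[HImp (inst A1 v1) (inst A1 u1), HImp (inst A2 u2) (inst A2 v2)]"])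
       (auto dest: GLh_wf)
next
  case (MBox A)
  then obtain n u' m v' where uv: "u = WBox n u'" "v = WBox m v'"
    by (cases u; cases v; auto)
  define X where "X = inst A u'"
  define Y where "Y = inst A v'"
  define N where "N = max n m"
  have wu: "is_witness u' A" "\<forall>k\<in>wnums u'. k < n" using MBox.prems uv by auto
  have wv: "is_witness v' A" "\<forall>k\<in>wnums v'. k < m" using MBox.prems uv by auto
  have pX: "wf X" "above n X" "above N X"
    using inst_props[OF wu(1)] wu(2) unfolding X_def above_def N_def by (auto simp: less_max_iff_disj subset_iff)
  have pY: "wf Y" "above m Y" "above N Y"
    using inst_props[OF wv(1)] wv(2) unfolding Y_def above_def N_def by (auto simp: less_max_iff_disj subset_iff)
  have ih: "GLh (HImp X Y)" using MBox.IH wu wv unfolding X_def Y_def by auto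
  have g1: "GLh (HImp (HBox n X) (HBox N X))" using eqv pX by auto
  have g2: "GLh (HBox N (HImp X Y))" using ih pX pY by (intro GLh.Nec) (auto simp: above_def)
  have g3: "GLh (HImp (HBox N (HImp X Y)) (HImp (HBox N X) (HBox N Y)))"
    by (rule GLh.AxK) (use pX pY in \<open>auto simp: above_def\<close>)
  have g4: "GLh (HImp (HBox N Y) (HBox m Y))" using eqv pY by auto
  have "GLh (HImp (HBox n X) (HBox m Y))"
    by (rule prop_cons[of "[HImp (HBox n X) (HBox N X), HBox N (HImp X Y), HImp (HBox N (HImp X Y)) (HImp (HBox N X) (HBox N Y)), HImp (HBox N Y) (HBox m Y)]"])
       (use g1 g2 g3 g4 pX pY in auto)
  then show ?case using uv X_def Y_def by simp
qed

theorem lemma3p12: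
  shows "(\<forall>A m n. wf A \<and> above m A \<and> above n A \<longrightarrow> GLh (HIff (HBox m A) (HBox n A)))
       \<and> (\<forall>A u v. is_witness u A \<and> is_witness v A \<longrightarrow> GLh (HImp (inst A u) (inst A v)))"
proof (intro conjI allI impI)
  fix A m n assume h: "wf A \<and> above m A \<and> above n A"
  have "GLh (HImp (HBox m A) (HBox n A))" "GLh (HImp (HBox n A) (HBox m A))"
    using eqv h by auto
  then show "GLh (HIff (HBox m A) (HBox n A))"
    by (intro prop_cons[of "[HImp (HBox m A) (HBox n A), HImp (HBox n A) (HBox m A)]"])
       (auto simp: HIff_def dest: GLh_wf)
next
  fix A u v assume "is_witness u A \<and> is_witness v A"
  then show "GLh (HImp (inst A u) (inst A v))" using part2 by auto
qed

end
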